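(* Let $\mathcal Q$ be a finite set of queries, where query $i$ has a size $s_i=\frac{|\mathcal S_i|\cdot\chi_i}{\mathbf p_i}>0$ and a positive weight $\mathbf w_i$. Let $c_2\ge 1$ and $c_3>1$ be constants and put $d=\frac{0.69}{c_2 c_3}$. Let $A_{[1]}=\{i^*\}$ where $i^*$ maximizes $\mathbf w_i$ over all queries $i$ with $s_i\le 1$ (and $A_{[1]}=\emptyset$ if there is none); let $A_{[2]}$ be an optimal solution of the 0-1 knapsack problem $\mathrm{KS}(d)$; and let $A$ be whichever of $A_{[1]},A_{[2]}$ has larger total weight. Let $OPT_{\mathrm{KS}(1)}$ be an optimal solution of $\mathrm{KS}(1)$. Then $$\frac{d}{2}\cdot\mathbf w\big(OPT_{\mathrm{KS}(1)}\big)\le \mathbf w(A).$$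
   Context: For a query $i$, $\mathcal S_i$ is its set of source nodes, $\chi_i>0$ is the time to transmit one of its data units over a link, and $\mathbf p_i>0$ is its period. For a set $B$ of queries, $\mathbf w(B)=\sum_{i\in B}\mathbf w_i$. The 0-1 knapsack problem with bag size $C$, denoted $\mathrm{KS}(C)$, treats each query $i$ as an item of size $s_i$ and weight $\mathbf w_i$, and asks for a subset of items of total size at most $C$ maximizing the total weight. In the paper, $c_2$ is the chromatic number of a coloring of interference-aware grid regions and $c_3$ is the maximum size of a connected dominating set inside an interference-aware region plus one, but only the stated numerical properties are used in the statement. *)

theory Defs
  imports Main Complex_Main
begin

definition qsize :: "('q \<Rightarrow> 'v set) \<Rightarrow> ('q \<Rightarrow> real) \<Rightarrow> ('q \<Rightarrow> real) \<Rightarrow> 'q \<Rightarrow> real" where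
  "qsize S chi p i = real (card (S i)) * chi i / p i"

definition ks_feasible :: "'q set \<Rightarrow> ('q \<Rightarrow> real) \<Rightarrow> real \<Rightarrow> 'q set \<Rightarrow> bool" where
  "ks_feasible Q s C B \<longleftrightarrow> B \<subseteq> Q \<and> sum s B \<le> C"

definition ks_optimal :: "'q set \<Rightarrow> ('q \<Rightarrow> real) \<Rightarrow> ('q \<Rightarrow> real) \<Rightarrow> real \<Rightarrow> 'q set \<Rightarrow> bool" where
  "ks_optimal Q s w C B \<longleftrightarrow> ks_feasible Q s C B \<and>
     (\<forall>B'. ks_feasible Q s C B' \<longrightarrow> sum w B' \<le> sum w B)"

end

theory Submission
  imports Defs
begin

lemma subset_window:
  fixes s :: "'q \<Rightarrow> real"
  assumes "finite B" "h > 0" "\<And>i. i \<in> B \<Longrightarrow> 0 < s i \<and> s i < h" "sum s B \<ge> h"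
  shows "\<exists>C\<subseteq>B. h \<le> sum s C \<and> sum s C < 2 * h"
  using assms
proof (induction B rule: finite_induct)
  case empty
  then show ?case using empty by simp
next
  case (insert x F)
  show ?case
  proof (cases "sum s F \<ge> h")
    case True
    then obtain C where "C \<subseteq> F" "h \<le> sum s C \<and> sum s C < 2 * h"
      using insert by auto
    then show ?thesis by blast
  next
    case False
    have "s x < h" using insert by auto
    have "sum s (insert x F) = s x + sum s F" using insert by simp
    then have "sum s (insert x F) < 2 * h" using False \<open>s x < h\<close> by linarith
    then show ?thesis using insert by blast
  qed
qed

lemma main_bound:
  fixes s w :: "'q \<Rightarrow> real"
  assumes finQ: "finite Q"
    and spos: "\<And>i. i \<in> Q \<Longrightarrow> s i > 0"
    and wpos: "\<And>i. i \<in> Q \<Longrightarrow> w i > 0"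
    and dpos: "d > 0"
    and single: "\<And>i. i \<in> Q \<Longrightarrow> s i \<le> 1 \<Longrightarrow> w i \<le> M"
    and knap: "\<And>B. B \<subseteq> Q \<Longrightarrow> sum s B \<le> d \<Longrightarrow> sum w B \<le> M"
  shows "B \<subseteq> Q \<Longrightarrow> sum s B \<le> 1 \<Longrightarrow> sum w B \<le> max 1 (2 * sum s B / d) * M"
proof (induction "card B" arbitrary: B rule: less_induct)
  case less
  have finB: "finite B" using less.prems finQ finite_subset by blast
  have M0: "M \<ge> 0" using knap[of "{}"] dpos by simp
  show ?case
  proof (cases "sum s B \<le> d")
    case True
    then have "sum w B \<le> M" using knap less.prems by blast
    also have "M \<le> max 1 (2 * sum s B / d) * M" using M0 by (simp add: mult_le_cancel_right1)
    finally show ?thesis .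
  next
    case False
    have sle: "\<And>C. C \<subseteq> B \<Longrightarrow> sum s C \<le> sum s B"
      using finB less.prems by (intro sum_mono2) (auto intro!: less_imp_le[OF spos])
    have "\<exists>C\<subseteq>B. d / 2 \<le> sum s C \<and> w` C = w ` C \<and> sum w C \<le> M"
    proof (cases "\<exists>i\<in>B. s i \<ge> d / 2")
      case True
      then obtain i where i: "i \<in> B" "s i \<ge> d/2" by blast
      have "s i \<le> sum s B" using sle[of "{i}"] i by simp
      then have "w i \<le> M" using single i less.prems by auto
      then show ?thesis using i by (intro exI[of _ "{i}"]) auto
    next
      case f2: False
      obtain C where C: "C \<subseteq> B" "d/2 \<le> sum s C" "sum s C < 2 * (d/2)"
        using subset_window[of B "d/2" s] finB f2 spos less.prems False dpos by force
      have "sum w C \<le> M" using knap C less.prems by auto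
      then show ?thesis using C by blast
    qed
    then obtain C where C: "C \<subseteq> B" "d / 2 \<le> sum s C" "sum w C \<le> M" by blast
    have Cne: "C \<noteq> {}" using C dpos by auto
    have finC: "finite C" using C finB finite_subset by blast
    have "card (B - C) < card B" using C Cne finB
      by (intro psubset_card_mono) auto
    moreover have "B - C \<subseteq> Q" using less.prems by auto
    moreover have sBC: "sum s (B - C) = sum s B - sum s C" using C finB by (simp add: sum_diff)
    moreover have "sum s (B - C) \<le> 1" using sBC C less.prems dpos by linarith
    ultimately have IH: "sum w (B - C) \<le> max 1 (2 * sum s (B - C) / d) * M"
      using less.hyps by blast
    have wBC: "sum w B = sum w C + sum w (B - C)" using C finB by (simp add: sum_diff)
    have "max 1 (2 * sum s (B - C) / d) \<le> 2 * sum s B / d - 1"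
    proof -
      have "2 * sum s (B - C) / d \<le> 2 * sum s B / d - 1"
        using sBC C dpos by (simp add: field_simps)
      moreover have "1 \<le> 2 * sum s B / d - 1" using False dpos by (simp add: field_simps)
      ultimately show ?thesis by simp
    qed
    then have "max 1 (2 * sum s (B - C) / d) * M \<le> (2 * sum s B / d - 1) * M"
      using M0 by (simp add: mult_right_mono)
    then have "sum w B \<le> (2 * sum s B / d) * M" using wBC IH C by (simp add: algebra_simps)
    also have "\<dots> \<le> max 1 (2 * sum s B / d) * M" using M0 by (intro mult_right_mono) auto
    finally show ?thesis .
  qed
qed

theorem lemma4:
  fixes Q :: "'q set" and S :: "'q \<Rightarrow> 'v set" and chi p w :: "'q \<Rightarrow> real"
    and c2 c3 d :: real and A1 A2 A OPT :: "'q set"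
  assumes finQ: "finite Q"
    and finS: "\<And>i. i \<in> Q \<Longrightarrow> finite (S i)"
    and chi_pos: "\<And>i. i \<in> Q \<Longrightarrow> chi i > 0"
    and p_pos: "\<And>i. i \<in> Q \<Longrightarrow> p i > 0"
    and size_pos: "\<And>i. i \<in> Q \<Longrightarrow> qsize S chi p i > 0"
    and w_pos: "\<And>i. i \<in> Q \<Longrightarrow> w i > 0"
    and c2: "c2 \<ge> 1" and c3: "c3 > 1"
    and d_def: "d = 0.69 / (c2 * c3)"
    and A1: "(\<not> (\<exists>i\<in>Q. qsize S chi p i \<le> 1) \<and> A1 = {}) \<or>
             (\<exists>i\<in>Q. qsize S chi p i \<le> 1 \<and>
                 (\<forall>j\<in>Q. qsize S chi p j \<le> 1 \<longrightarrow> w j \<le> w i) \<and> A1 = {i})"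
    and A2: "ks_optimal Q (qsize S chi p) w d A2"
    and A_choice: "A = A1 \<or> A = A2"
    and A_max: "sum w A = max (sum w A1) (sum w A2)"
    and OPT: "ks_optimal Q (qsize S chi p) w 1 OPT"
  shows "d / 2 * sum w OPT \<le> sum w A"
proof -
  let ?s = "qsize S chi p"
  let ?M = "sum w A"
  have cc: "c2 * c3 \<ge> 1"
  proof -
    have "1 * 1 \<le> c2 * c3" using c2 c3 by (intro mult_mono) auto
    then show ?thesis by simp
  qed
  have dpos: "d > 0" unfolding d_def using cc by (intro divide_pos_pos) auto
  have dle: "d \<le> 0.69 / 1" unfolding d_def using cc by (intro divide_left_mono) auto
  have MA1: "sum w A1 \<le> ?M" and MA2: "sum w A2 \<le> ?M" using A_max by auto
  have single: "w i \<le> ?M" if "i \<in> Q" "?s i \<le> 1" for i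
  proof -
    from A1 that obtain k where "A1 = {k}" "w i \<le> w k" by blast
    then show ?thesis using MA1 by simp
  qed
  have knap: "sum w B \<le> ?M" if "B \<subseteq> Q" "sum ?s B \<le> d" for B
  proof -
    have "ks_feasible Q ?s d B" unfolding ks_feasible_def using that by blast
    then have "sum w B \<le> sum w A2" using A2 unfolding ks_optimal_def by blast
    then show ?thesis using MA2 by linarith
  qed
  have o: "OPT \<subseteq> Q" "sum ?s OPT \<le> 1" using OPT unfolding ks_optimal_def ks_feasible_def by auto
  have b: "sum w OPT \<le> max 1 (2 * sum ?s OPT / d) * ?M"
    using main_bound[OF finQ size_pos w_pos dpos single knap o] by blast
  have M0: "?M \<ge> 0" using knap[of "{}"] dpos by simp
  have m1: "2 * sum ?s OPT / d \<le> 2 / d" using o dpos by (intro divide_right_mono) auto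
  have m2: "1 \<le> 2 / d" using dpos dle by (simp add: le_divide_eq)
  have "max 1 (2 * sum ?s OPT / d) \<le> 2 / d" using m1 m2 by simp
  then have "sum w OPT \<le> 2 / d * ?M" using b M0 by (meson mult_right_mono order_trans)
  then have "d / 2 * sum w OPT \<le> d / 2 * (2 / d * ?M)" using dpos by (intro mult_left_mono) auto
  also have "\<dots> = ?M" using dpos by simp
  finally show ?thesis .
qed

end
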